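(* Let $(X,T)$ be a minimal topological dynamical system with $T$ a homeomorphism, and suppose $\delta>0$ is such that $(X,T)$ is block $\mathcal{F}_{ip}$-sensitive with sensitive constant $10\delta$. Let $x\in X$ and let $U$ be any neighborhood of $x$. Then there are $z\in U$ and $y\in X$ such that $(y,z)\in\mathbf{RP}^{[\infty]}(X)$ and $d(z,y)\ge\delta$.
   Context: A topological dynamical system: compact metric space $(X,d)$ with continuous surjection $T$; minimal means every orbit is dense. A finite IP-set of length $n$ is $FS((p_i)_{i=1}^n)=\{\sum_{i\in\alpha}p_i:\emptyset\ne\alpha\subset\{1,\dots,n\}\}$ with $p_i\in\mathbb{N}$. $(X,T)$ is block $\mathcal{F}_{ip}$-sensitive with sensitive constant $c>0$ if for each $x\in X$, each neighborhood $U$ of $x$ and each $l\in\mathbb{N}$ there is $y_l\in U$ such that $\{n\in\mathbb{Z}_+:d(T^nx,T^ny_l)>c\}$ contains a finite IP-set of length $l$. For $d\in\mathbb{N}$, $(x,y)\in\mathbf{RP}^{[d]}(X)$ if for every $\eta>0$ there are $x',y'$ and $\mathbf{n}\in\mathbb{Z}^d$ with $d(x,x')<\eta$, $d(y,y')<\eta$, $d(T^{\mathbf{n}\cdot\varepsilon}x',T^{\mathbf{n}\cdot\varepsilon}y')<\eta$ for all $\varepsilon\in\{0,1\}^d\setminus\{0\}$; $\mathbf{RP}^{[\infty]}=\bigcap_d\mathbf{RP}^{[d]}$. *)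

theory Defs
  imports "HOL-Analysis.Analysis"
begin

definition tds :: "'a::metric_space set \<Rightarrow> ('a \<Rightarrow> 'a) \<Rightarrow> bool" where
  "tds X T \<longleftrightarrow> compact X \<and> X \<noteq> {} \<and> continuous_on X T \<and> T ` X = X"

definition minimal_sys :: "'a::metric_space set \<Rightarrow> ('a \<Rightarrow> 'a) \<Rightarrow> bool" where
  "minimal_sys X T \<longleftrightarrow> (\<forall>x\<in>X. X \<subseteq> closure {(T ^^ n) x | n. True})"

definition ipow :: "'a set \<Rightarrow> ('a \<Rightarrow> 'a) \<Rightarrow> int \<Rightarrow> 'a \<Rightarrow> 'a" where
  "ipow X T n = (if n \<ge> 0 then T ^^ nat n else (inv_into X T) ^^ nat (- n))"

definition FS :: "(nat \<Rightarrow> nat) \<Rightarrow> nat \<Rightarrow> nat set" where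
  "FS p n = {(\<Sum>i\<in>\<alpha>. p i) | \<alpha>. \<alpha> \<noteq> {} \<and> \<alpha> \<subseteq> {0..<n}}"

definition contains_finite_IP :: "nat set \<Rightarrow> nat \<Rightarrow> bool" where
  "contains_finite_IP A l \<longleftrightarrow> (\<exists>p. (\<forall>i<l. p i \<ge> 1) \<and> FS p l \<subseteq> A)"

definition block_Fip_sensitive :: "'a::metric_space set \<Rightarrow> ('a \<Rightarrow> 'a) \<Rightarrow> real \<Rightarrow> bool" where
  "block_Fip_sensitive X T c \<longleftrightarrow> c > 0 \<and>
     (\<forall>x\<in>X. \<forall>U. open U \<and> x \<in> U \<longrightarrow> (\<forall>l::nat.
        \<exists>y\<in>U \<inter> X. contains_finite_IP {n. dist ((T ^^ n) x) ((T ^^ n) y) > c} l))"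

text \<open>Regionally proximal relation of order d; vectors in Z^d are functions on {0..<d},
  and epsilon in {0,1}^d minus 0 is encoded as a nonempty subset S of {0..<d}.\<close>
definition RP :: "'a::metric_space set \<Rightarrow> ('a \<Rightarrow> 'a) \<Rightarrow> nat \<Rightarrow> ('a \<times> 'a) set" where
  "RP X T d = {(x, y). x \<in> X \<and> y \<in> X \<and> (\<forall>\<eta>>0. \<exists>x'\<in>X. \<exists>y'\<in>X. \<exists>n::nat \<Rightarrow> int.
      dist x x' < \<eta> \<and> dist y y' < \<eta> \<and>
      (\<forall>S. S \<subseteq> {0..<d} \<and> S \<noteq> {} \<longrightarrow>
         dist (ipow X T (\<Sum>i\<in>S. n i) x') (ipow X T (\<Sum>i\<in>S. n i) y') < \<eta>))}"

definition RP_inf :: "'a::metric_space set \<Rightarrow> ('a \<Rightarrow> 'a) \<Rightarrow> ('a \<times> 'a) set" where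
  "RP_inf X T = (\<Inter>d\<in>{1..}. RP X T d)"

end

theory Submission
  imports Defs "HOL-Library.FuncSet" "HOL-Library.Countable_Set"
begin

lemma affine_cube:
  fixes L r :: nat
  shows
  "\<exists>n. \<forall>(I::nat set) (\<theta>::nat set \<Rightarrow> nat). finite I \<longrightarrow> n \<le> card I \<longrightarrow> card (\<theta> ` Pow I) \<le> r \<longrightarrow>
     (\<exists>F G. F \<subseteq> I \<and> (\<forall>j<L. G j \<subseteq> I \<and> G j \<noteq> {} \<and> G j \<inter> F = {}) \<and>
        (\<forall>i<L. \<forall>j<L. i \<noteq> j \<longrightarrow> G i \<inter> G j = {}) \<and>
        (\<forall>J \<subseteq> {..<L}. \<theta> (F \<union> \<Union>(G ` J)) = \<theta> F))"
proof (induction L arbitrary: r)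
  case 0
  show ?case by (intro exI[of _ 0] allI impI exI[of _ "{}"] exI[of _ "\<lambda>_. {}"]) auto
next
  case (Suc L)
  obtain n' where IH: "\<forall>(I::nat set) (\<theta>::nat set \<Rightarrow> nat). finite I \<longrightarrow> n' \<le> card I \<longrightarrow> card (\<theta> ` Pow I) \<le> r ^ Suc r \<longrightarrow>
     (\<exists>F G. F \<subseteq> I \<and> (\<forall>j<L. G j \<subseteq> I \<and> G j \<noteq> {} \<and> G j \<inter> F = {}) \<and>
        (\<forall>i<L. \<forall>j<L. i \<noteq> j \<longrightarrow> G i \<inter> G j = {}) \<and>
        (\<forall>J \<subseteq> {..<L}. \<theta> (F \<union> \<Union>(G ` J)) = \<theta> F))"
    using Suc.IH[of "r ^ Suc r"] by (elim exE)
  show ?case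
  proof (rule exI[of _ "r + n'"], intro allI impI)
    fix I :: "nat set" and \<theta> :: "nat set \<Rightarrow> nat"
    assume fI: "finite I" and cI: "r + n' \<le> card I" and cc: "card (\<theta> ` Pow I) \<le> r"
    obtain P1 where P1: "P1 \<subseteq> I" "card P1 = r" "finite P1"
      using obtain_subset_with_card_n[of r I] cI by auto
    define P2 where "P2 = I - P1"
    have fP2: "finite P2" using fI P2_def by auto
    have cP2: "n' \<le> card P2" using P1 cI fI unfolding P2_def by (simp add: card_Diff_subset)
    obtain e where e: "bij_betw e {0..<r} P1" using ex_bij_betw_nat_finite[OF P1(3)] P1(2) by auto
    define E where "E k = e ` {..<k}" for k
    have EP1: "k \<le> r \<Longrightarrow> E k \<subseteq> P1" for k
      using e unfolding E_def bij_betw_def by auto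
    have EI: "k \<le> r \<Longrightarrow> E k \<subseteq> I" for k using EP1 P1 by blast
    define \<psi> where "\<psi> B = restrict (\<lambda>k. \<theta> (E k \<union> B)) {..r}" for B
    define \<theta>' where "\<theta>' = to_nat_on (\<psi> ` Pow P2) \<circ> \<psi>"
    have inj: "inj_on (to_nat_on (\<psi> ` Pow P2)) (\<psi> ` Pow P2)"
      by (rule inj_on_to_nat_on) (simp add: fP2 countable_finite)
    have psiPi: "\<psi> ` Pow P2 \<subseteq> PiE {..r} (\<lambda>_. \<theta> ` Pow I)"
    proof -
      have h: "\<theta> (E k \<union> B) \<in> \<theta> ` Pow I" if "k \<le> r" "B \<subseteq> P2" for k B
        using EI[OF that(1)] that(2) P2_def by (intro imageI) auto
      show ?thesis unfolding \<psi>_def by (auto simp: PiE_def Pi_def intro: h)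
    qed
    have "card (\<theta>' ` Pow P2) \<le> card (\<psi> ` Pow P2)"
      unfolding \<theta>'_def image_comp[symmetric] by (rule card_image_le) (simp add: fP2)
    also have "\<dots> \<le> card (PiE {..r} (\<lambda>_. \<theta> ` Pow I))"
      by (rule card_mono[OF _ psiPi]) (simp add: finite_PiE fI)
    also have "\<dots> = card (\<theta> ` Pow I) ^ Suc r" by (simp add: card_PiE)
    also have "\<dots> \<le> r ^ Suc r" by (rule power_mono[OF cc]) simp
    finally have cc': "card (\<theta>' ` Pow P2) \<le> r ^ Suc r" .
    obtain F G where F: "F \<subseteq> P2" and G: "\<forall>j<L. G j \<subseteq> P2 \<and> G j \<noteq> {} \<and> G j \<inter> F = {}"
      and Gd: "\<forall>i<L. \<forall>j<L. i \<noteq> j \<longrightarrow> G i \<inter> G j = {}"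
      and mono: "\<forall>J \<subseteq> {..<L}. \<theta>' (F \<union> \<Union>(G ` J)) = \<theta>' F"
      using IH[rule_format, OF fP2 cP2 cc'] by (elim exE conjE) (rule that; assumption)
    have mono2: "\<theta> (E k \<union> (F \<union> \<Union>(G ` J))) = \<theta> (E k \<union> F)" if "J \<subseteq> {..<L}" "k \<le> r" for J k
    proof -
      have s: "F \<union> \<Union>(G ` J) \<in> Pow P2" using F G that by auto
      have "\<psi> (F \<union> \<Union>(G ` J)) = \<psi> F"
      proof (rule inj_onD[OF inj])
        show "to_nat_on (\<psi> ` Pow P2) (\<psi> (F \<union> \<Union>(G ` J))) = to_nat_on (\<psi> ` Pow P2) (\<psi> F)"
          using mono that unfolding \<theta>'_def by auto
      qed (use s F in auto)
      then show ?thesis using that unfolding \<psi>_def restrict_def by (metis atMost_iff)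
    qed
    have "\<not> inj_on (\<lambda>k. \<theta> (E k \<union> F)) {..r}"
    proof (rule pigeonhole)
      have "(\<lambda>k. \<theta> (E k \<union> F)) ` {..r} \<subseteq> \<theta> ` Pow I" using EI F P2_def by auto
      then have "card ((\<lambda>k. \<theta> (E k \<union> F)) ` {..r}) \<le> card (\<theta> ` Pow I)"
        by (rule card_mono[rotated]) (simp add: fI)
      then show "card ((\<lambda>k. \<theta> (E k \<union> F)) ` {..r}) < card {..r}" using cc by simp
    qed
    then obtain k1 k2 where k: "k1 < k2" "k2 \<le> r" "\<theta> (E k1 \<union> F) = \<theta> (E k2 \<union> F)"
      unfolding inj_on_def by (metis atMost_iff linorder_neqE_nat)
    define F' where "F' = E k1 \<union> F"
    define G' where "G' j = (if j = L then e ` {k1..<k2} else G j)" for j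
    have inje: "inj_on e {0..<r}" using e bij_betw_def by blast
    have Ek2: "E k2 = E k1 \<union> e ` {k1..<k2}"
    proof -
      have "{..<k2} = {..<k1} \<union> {k1..<k2}" using k by auto
      then show ?thesis unfolding E_def by (simp add: image_Un)
    qed
    have disjE: "e ` {k1..<k2} \<inter> E k1 = {}"
    proof -
      have "\<And>a b. a \<in> {k1..<k2} \<Longrightarrow> b < k1 \<Longrightarrow> e a \<noteq> e b"
        using inje k unfolding inj_on_def by (metis atLeastLessThan_iff le_less_trans less_irrefl less_le_trans order.strict_implies_order zero_le)
      then show ?thesis unfolding E_def by auto
    qed
    have eP1: "e ` {k1..<k2} \<subseteq> P1" using EP1[of k2] Ek2 k by auto
    show "\<exists>F G. F \<subseteq> I \<and> (\<forall>j<Suc L. G j \<subseteq> I \<and> G j \<noteq> {} \<and> G j \<inter> F = {}) \<and>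
        (\<forall>i<Suc L. \<forall>j<Suc L. i \<noteq> j \<longrightarrow> G i \<inter> G j = {}) \<and>
        (\<forall>J \<subseteq> {..<Suc L}. \<theta> (F \<union> \<Union>(G ` J)) = \<theta> F)"
    proof (rule exI[of _ F'], rule exI[of _ G'], intro conjI)
      show "F' \<subseteq> I" unfolding F'_def using EI[of k1] k F P2_def by auto
    next
      show "\<forall>j<Suc L. G' j \<subseteq> I \<and> G' j \<noteq> {} \<and> G' j \<inter> F' = {}"
      proof (intro allI impI)
      fix j assume j: "j < Suc L"
      show "G' j \<subseteq> I \<and> G' j \<noteq> {} \<and> G' j \<inter> F' = {}"
      proof (cases "j = L")
        case True
        then show ?thesis unfolding G'_def F'_def using eP1 P1 k disjE F P2_def by auto
      next
        case False
        then have "j < L" using j by simp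
        then show ?thesis unfolding G'_def F'_def using G False EP1[of k1] k P2_def by auto
      qed
      qed
    next
      show "\<forall>i<Suc L. \<forall>j<Suc L. i \<noteq> j \<longrightarrow> G' i \<inter> G' j = {}"
      proof (intro allI impI)
      fix i j assume ij: "i < Suc L" "j < Suc L" "i \<noteq> j"
      show "G' i \<inter> G' j = {}"
      proof -
        have GP1: "\<And>t. t < L \<Longrightarrow> G t \<inter> P1 = {}" using G P2_def by blast
        have i': "i \<noteq> L \<Longrightarrow> i < L" and j': "j \<noteq> L \<Longrightarrow> j < L" using ij by auto
        show ?thesis
        proof (cases "i = L")
          case True
          then have "j < L" using j' ij by auto
          then show ?thesis unfolding G'_def using True GP1[of j] eP1 ij by auto
        next
          case False
          show ?thesis
          proof (cases "j = L")
            case True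
            then show ?thesis unfolding G'_def using False i' GP1[of i] eP1 by auto
          next
            case False2: False
            then show ?thesis unfolding G'_def using False i' j' Gd ij by auto
          qed
        qed
      qed
      qed
    next
      show "\<forall>J \<subseteq> {..<Suc L}. \<theta> (F' \<union> \<Union>(G' ` J)) = \<theta> F'"
      proof (intro allI impI)
      fix J assume J: "J \<subseteq> {..<Suc L}"
      show "\<theta> (F' \<union> \<Union>(G' ` J)) = \<theta> F'"
      proof (cases "L \<in> J")
        case False
        then have J': "J \<subseteq> {..<L}" using J by (auto simp: less_Suc_eq)
        have "\<Union>(G' ` J) = \<Union>(G ` J)" unfolding G'_def using False by auto
        then show ?thesis unfolding F'_def using mono2[OF J', of k1] k by (simp add: Un_assoc)
      next
        case True
        define J0 where "J0 = J - {L}"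
        have J0: "J0 \<subseteq> {..<L}" using J unfolding J0_def by (auto simp: less_Suc_eq)
        have "\<Union>(G' ` J) = e ` {k1..<k2} \<union> \<Union>(G ` J0)"
          unfolding G'_def J0_def using True by auto
        then have "F' \<union> \<Union>(G' ` J) = E k2 \<union> (F \<union> \<Union>(G ` J0))"
          unfolding F'_def using Ek2 by auto
        then show ?thesis unfolding F'_def using mono2[OF J0 k(2)] k(3) by simp
      qed
      qed
    qed
  qed
qed


lemma normal_form:
  fixes k r :: nat
  shows "\<exists>n. \<forall>(I::nat set) (\<theta>::nat set \<Rightarrow> nat). finite I \<longrightarrow> n \<le> card I \<longrightarrow> card (\<theta> ` Pow I) \<le> r \<longrightarrow>
     (\<exists>D col. (\<forall>i<k. D i \<subseteq> I \<and> D i \<noteq> {}) \<and> (\<forall>i<k. \<forall>j<k. i \<noteq> j \<longrightarrow> D i \<inter> D j = {}) \<and>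
        (\<forall>S \<subseteq> {..<k}. S \<noteq> {} \<longrightarrow> \<theta> (\<Union>(D ` S)) = col (Max S)))"
proof (induction k)
  case 0
  show ?case by (intro exI[of _ 0] allI impI exI[of _ "\<lambda>_. {}"] exI[of _ "\<lambda>_. 0::nat"]) auto
next
  case (Suc k)
  obtain m where IH: "\<forall>(I::nat set) (\<theta>::nat set \<Rightarrow> nat). finite I \<longrightarrow> m \<le> card I \<longrightarrow> card (\<theta> ` Pow I) \<le> r \<longrightarrow>
     (\<exists>D col. (\<forall>i<k. D i \<subseteq> I \<and> D i \<noteq> {}) \<and> (\<forall>i<k. \<forall>j<k. i \<noteq> j \<longrightarrow> D i \<inter> D j = {}) \<and>
        (\<forall>S \<subseteq> {..<k}. S \<noteq> {} \<longrightarrow> \<theta> (\<Union>(D ` S)) = col (Max S)))"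
    using Suc.IH by (elim exE)
  obtain n where AC: "\<forall>(I::nat set) (\<theta>::nat set \<Rightarrow> nat). finite I \<longrightarrow> n \<le> card I \<longrightarrow> card (\<theta> ` Pow I) \<le> r \<longrightarrow>
     (\<exists>F G. F \<subseteq> I \<and> (\<forall>j<Suc m. G j \<subseteq> I \<and> G j \<noteq> {} \<and> G j \<inter> F = {}) \<and>
        (\<forall>i<Suc m. \<forall>j<Suc m. i \<noteq> j \<longrightarrow> G i \<inter> G j = {}) \<and>
        (\<forall>J \<subseteq> {..<Suc m}. \<theta> (F \<union> \<Union>(G ` J)) = \<theta> F))"
    using affine_cube[where L="Suc m" and r=r] by (elim exE)
  show ?case
  proof (rule exI[of _ n], intro allI impI)
    fix I :: "nat set" and \<theta> :: "nat set \<Rightarrow> nat"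
    assume fI: "finite I" and cI: "n \<le> card I" and cc: "card (\<theta> ` Pow I) \<le> r"
    obtain F G where F: "F \<subseteq> I" and G: "\<forall>j<Suc m. G j \<subseteq> I \<and> G j \<noteq> {} \<and> G j \<inter> F = {}"
      and Gd: "\<forall>i<Suc m. \<forall>j<Suc m. i \<noteq> j \<longrightarrow> G i \<inter> G j = {}"
      and mono: "\<forall>J \<subseteq> {..<Suc m}. \<theta> (F \<union> \<Union>(G ` J)) = \<theta> F"
      using AC[rule_format, OF fI cI cc] by (elim exE conjE) (rule that; assumption)
    define \<theta>' where "\<theta>' Y = \<theta> (\<Union>(G ` Y))" for Y
    have GI: "\<Union>(G ` Y) \<subseteq> I" if "Y \<subseteq> {..<Suc m}" for Y using G that by blast
    have cc': "card (\<theta>' ` Pow {..<m}) \<le> r"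
    proof -
      have "\<theta>' ` Pow {..<m} \<subseteq> \<theta> ` Pow I"
      proof
        fix z assume "z \<in> \<theta>' ` Pow {..<m}"
        then obtain Y where "Y \<subseteq> {..<m}" "z = \<theta>' Y" by auto
        moreover have "\<Union>(G ` Y) \<subseteq> I" using \<open>Y \<subseteq> {..<m}\<close> by (intro GI) auto
        ultimately show "z \<in> \<theta> ` Pow I" unfolding \<theta>'_def by auto
      qed
      then have "card (\<theta>' ` Pow {..<m}) \<le> card (\<theta> ` Pow I)" by (rule card_mono[rotated]) (simp add: fI)
      then show ?thesis using cc by simp
    qed
    obtain D' col' where D': "\<forall>i<k. D' i \<subseteq> {..<m} \<and> D' i \<noteq> {}"
      and D'd: "\<forall>i<k. \<forall>j<k. i \<noteq> j \<longrightarrow> D' i \<inter> D' j = {}"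
      and col': "\<forall>S \<subseteq> {..<k}. S \<noteq> {} \<longrightarrow> \<theta>' (\<Union>(D' ` S)) = col' (Max S)"
      using IH[rule_format, of "{..<m}" \<theta>', OF finite_lessThan _ cc'] by (metis card_lessThan order_refl)
    define D where "D i = (if i = k then F \<union> G m else \<Union>(G ` D' i))" for i
    define col where "col i = (if i = k then \<theta> F else col' i)" for i
    have D'm: "i < k \<Longrightarrow> D' i \<subseteq> {..<Suc m}" for i using D' by (metis lessThan_iff less_SucI subset_iff)
    show "\<exists>D col. (\<forall>i<Suc k. D i \<subseteq> I \<and> D i \<noteq> {}) \<and> (\<forall>i<Suc k. \<forall>j<Suc k. i \<noteq> j \<longrightarrow> D i \<inter> D j = {}) \<and>
        (\<forall>S \<subseteq> {..<Suc k}. S \<noteq> {} \<longrightarrow> \<theta> (\<Union>(D ` S)) = col (Max S))"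
    proof (rule exI[of _ D], rule exI[of _ col], intro conjI)
      show "\<forall>i<Suc k. D i \<subseteq> I \<and> D i \<noteq> {}"
      proof (intro allI impI)
        fix i assume i: "i < Suc k"
        show "D i \<subseteq> I \<and> D i \<noteq> {}"
        proof (cases "i = k")
          case True then show ?thesis unfolding D_def using F G by auto
        next
          case False
          then have ik: "i < k" using i by simp
          then obtain t where t: "t \<in> D' i" using D' by blast
          have "t < m" using t D' ik by auto
          then have "G t \<noteq> {}" using G by auto
          moreover have "\<Union>(G ` D' i) \<subseteq> I" using GI[OF D'm[OF ik]] .
          ultimately show ?thesis unfolding D_def using False t by auto
        qed
      qed
    next
      show "\<forall>i<Suc k. \<forall>j<Suc k. i \<noteq> j \<longrightarrow> D i \<inter> D j = {}"
      proof (intro allI impI)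
        fix i j assume ij: "i < Suc k" "j < Suc k" "i \<noteq> j"
        have GD: "\<Union>(G ` A) \<inter> \<Union>(G ` B) = {}" if "A \<subseteq> {..<Suc m}" "B \<subseteq> {..<Suc m}" "A \<inter> B = {}" for A B
        proof -
          { fix x a b assume "a \<in> A" "b \<in> B" "x \<in> G a" "x \<in> G b"
            then have False using Gd that by (metis disjoint_iff lessThan_iff subsetD) }
          then show ?thesis by blast
        qed
        have Fk: "(F \<union> G m) \<inter> \<Union>(G ` D' t) = {}" if "t < k" for t
        proof -
          have "\<Union>(G ` {m}) \<inter> \<Union>(G ` D' t) = {}" 
          proof -
            have "m \<notin> D' t" using D' that by (metis lessThan_iff less_irrefl subsetD)
            then show ?thesis using GD[of "{m}" "D' t"] D'm[OF that] by auto
          qed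
          moreover have "F \<inter> \<Union>(G ` D' t) = {}" using G D'm[OF that] by blast
          ultimately show ?thesis by auto
        qed
        show "D i \<inter> D j = {}"
        proof (cases "i = k")
          case True
          then have "j < k" using ij by auto
          then show ?thesis unfolding D_def using True ij Fk by auto
        next
          case False
          show ?thesis
          proof (cases "j = k")
            case True
            then have "i < k" using ij False by auto
            then show ?thesis unfolding D_def using True False Fk by auto
          next
            case False2: False
            then have "i < k" "j < k" using ij False by auto
            then show ?thesis unfolding D_def using False False2 GD[OF D'm D'm] D'd ij by auto
          qed
        qed
      qed
    next
      show "\<forall>S \<subseteq> {..<Suc k}. S \<noteq> {} \<longrightarrow> \<theta> (\<Union>(D ` S)) = col (Max S)"
      proof (intro allI impI)
        fix S assume S: "S \<subseteq> {..<Suc k}" "S \<noteq> {}"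
        have fS: "finite S" using S finite_subset by blast
        show "\<theta> (\<Union>(D ` S)) = col (Max S)"
        proof (cases "k \<in> S")
          case True
          have MS: "Max S = k" using S True fS by (intro Max_eqI) auto
          define J where "J = insert m (\<Union>(D' ` (S - {k})))"
          have J: "J \<subseteq> {..<Suc m}"
          proof -
            have "\<Union>(D' ` (S - {k})) \<subseteq> {..<Suc m}"
            proof
              fix x assume "x \<in> \<Union>(D' ` (S - {k}))"
              then obtain i where "i \<in> S - {k}" "x \<in> D' i" by auto
              moreover then have "i < k" using S by (auto simp: less_Suc_eq)
              ultimately show "x \<in> {..<Suc m}" using D'm by blast
            qed
            then show ?thesis unfolding J_def by auto
          qed
          have "\<Union>(D ` S) = F \<union> \<Union>(G ` J)"
          proof -
            have "\<Union>(D ` S) = D k \<union> \<Union>(D ` (S - {k}))" using True by blast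
            also have "\<Union>(D ` (S - {k})) = \<Union>(G ` \<Union>(D' ` (S - {k})))" unfolding D_def by auto
            finally show ?thesis unfolding J_def D_def by auto
          qed
          then show ?thesis using mono J MS unfolding col_def by simp
        next
          case False
          then have Sk: "S \<subseteq> {..<k}" using S by (auto simp: less_Suc_eq)
          have "\<Union>(D ` S) = \<Union>(G ` \<Union>(D' ` S))" unfolding D_def using False by auto
          then have "\<theta> (\<Union>(D ` S)) = col' (Max S)" using col' Sk S unfolding \<theta>'_def by simp
          moreover have "Max S \<noteq> k" using Max_in[OF fS S(2)] False by auto
          ultimately show ?thesis unfolding col_def by simp
        qed
      qed
    qed
  qed
qed


lemma big_fiber:
  fixes col :: "nat \<Rightarrow> nat"
  assumes "card (col ` {..<K}) \<le> r" "r * d < K"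
  shows "\<exists>c. d < card {i\<in>{..<K}. col i = c}"
proof (rule ccontr)
  assume "\<not> ?thesis"
  then have le: "card {i\<in>{..<K}. col i = c} \<le> d" for c by (metis not_le)
  have "{..<K} = (\<Union>c\<in>col ` {..<K}. {i\<in>{..<K}. col i = c})" by auto
  then have "K = card (\<Union>c\<in>col ` {..<K}. {i\<in>{..<K}. col i = c})" by (metis card_lessThan)
  also have "\<dots> \<le> (\<Sum>c\<in>col ` {..<K}. card {i\<in>{..<K}. col i = c})"
    by (rule card_UN_le) simp
  also have "\<dots> \<le> card (col ` {..<K}) * d"
    using sum_bounded_above[of "col ` {..<K}" "\<lambda>c. card {i\<in>{..<K}. col i = c}" d] le by simp
  also have "\<dots> \<le> r * d" using assms(1) by simp
  finally show False using assms(2) by simp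
qed

lemma folkman:
  fixes d r :: nat
  shows "\<exists>n. \<forall>(\<theta>::nat set \<Rightarrow> nat). card (\<theta> ` Pow {..<n}) \<le> r \<longrightarrow>
     (\<exists>D c. (\<forall>j\<le>d. D j \<subseteq> {..<n} \<and> D j \<noteq> {}) \<and> (\<forall>i\<le>d. \<forall>j\<le>d. i \<noteq> j \<longrightarrow> D i \<inter> D j = {}) \<and>
        (\<forall>S \<subseteq> {..d}. S \<noteq> {} \<longrightarrow> \<theta> (\<Union>(D ` S)) = c))"
proof -
  define K where "K = r * d + 1"
  obtain n where NF: "\<forall>(I::nat set) (\<theta>::nat set \<Rightarrow> nat). finite I \<longrightarrow> n \<le> card I \<longrightarrow> card (\<theta> ` Pow I) \<le> r \<longrightarrow>
     (\<exists>D col. (\<forall>i<K. D i \<subseteq> I \<and> D i \<noteq> {}) \<and> (\<forall>i<K. \<forall>j<K. i \<noteq> j \<longrightarrow> D i \<inter> D j = {}) \<and>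
        (\<forall>S \<subseteq> {..<K}. S \<noteq> {} \<longrightarrow> \<theta> (\<Union>(D ` S)) = col (Max S)))"
    using normal_form[where k=K and r=r] by (elim exE)
  show ?thesis
  proof (rule exI[of _ n], intro allI impI)
    fix \<theta> :: "nat set \<Rightarrow> nat" assume cc: "card (\<theta> ` Pow {..<n}) \<le> r"
    obtain D col where D: "\<forall>i<K. D i \<subseteq> {..<n} \<and> D i \<noteq> {}"
      and Dd: "\<forall>i<K. \<forall>j<K. i \<noteq> j \<longrightarrow> D i \<inter> D j = {}"
      and col: "\<forall>S \<subseteq> {..<K}. S \<noteq> {} \<longrightarrow> \<theta> (\<Union>(D ` S)) = col (Max S)"
      using NF[rule_format, of "{..<n}" \<theta>, OF finite_lessThan _ cc] by (metis card_lessThan order_refl)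
    have colD: "col i = \<theta> (D i)" if "i < K" for i
      using col[rule_format, of "{i}"] that by simp
    have "col ` {..<K} \<subseteq> \<theta> ` Pow {..<n}"
    proof
      fix z assume "z \<in> col ` {..<K}"
      then obtain i where "i < K" "z = col i" by auto
      then show "z \<in> \<theta> ` Pow {..<n}" using colD D by auto
    qed
    then have "card (col ` {..<K}) \<le> r" using cc by (meson card_mono finite_imageI finite_Pow_iff finite_lessThan order_trans)
    then obtain c where c: "d < card {i\<in>{..<K}. col i = c}" using big_fiber[of col K r d] K_def by auto
    obtain Q where Q: "Q \<subseteq> {i\<in>{..<K}. col i = c}" "card Q = Suc d" "finite Q"
      using obtain_subset_with_card_n[of "Suc d" "{i\<in>{..<K}. col i = c}"] c by auto
    obtain h where h: "bij_betw h {0..<Suc d} Q" using ex_bij_betw_nat_finite[OF Q(3)] Q(2) by auto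
    have hQ: "j \<le> d \<Longrightarrow> h j \<in> Q" for j using h unfolding bij_betw_def by auto
    have hinj: "inj_on h {..d}" using h unfolding bij_betw_def by (simp add: atLeast0LessThan lessThan_Suc_atMost)
    show "\<exists>D c. (\<forall>j\<le>d. D j \<subseteq> {..<n} \<and> D j \<noteq> {}) \<and> (\<forall>i\<le>d. \<forall>j\<le>d. i \<noteq> j \<longrightarrow> D i \<inter> D j = {}) \<and>
        (\<forall>S \<subseteq> {..d}. S \<noteq> {} \<longrightarrow> \<theta> (\<Union>(D ` S)) = c)"
    proof (rule exI[of _ "\<lambda>j. D (h j)"], rule exI[of _ c], intro conjI)
      show "\<forall>j\<le>d. D (h j) \<subseteq> {..<n} \<and> D (h j) \<noteq> {}"
      proof (intro allI impI)
      fix j assume "j \<le> d"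
      then have "h j < K" using hQ Q by auto
      then show "D (h j) \<subseteq> {..<n} \<and> D (h j) \<noteq> {}" using D by auto
      qed
    next
      show "\<forall>i\<le>d. \<forall>j\<le>d. i \<noteq> j \<longrightarrow> D (h i) \<inter> D (h j) = {}"
      proof (intro allI impI)
      fix i j assume ij: "i \<le> d" "j \<le> d" "i \<noteq> j"
      then have "h i \<noteq> h j" using hinj unfolding inj_on_def by auto
      moreover have "h i < K" "h j < K" using hQ Q ij by auto
      ultimately show "D (h i) \<inter> D (h j) = {}" using Dd by auto
      qed
    next
      show "\<forall>S \<subseteq> {..d}. S \<noteq> {} \<longrightarrow> \<theta> (\<Union>((\<lambda>j. D (h j)) ` S)) = c"
      proof (intro allI impI)
      fix S assume S: "S \<subseteq> {..d}" "S \<noteq> {}"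
      have hS: "h ` S \<subseteq> Q" using hQ S by auto
      then have hSK: "h ` S \<subseteq> {..<K}" using Q by auto
      have "finite (h ` S)" using S finite_subset by blast
      then have "Max (h ` S) \<in> h ` S" using S by (intro Max_in) auto
      then have "col (Max (h ` S)) = c" using hS Q by auto
      moreover have "\<Union>((\<lambda>j. D (h j)) ` S) = \<Union>(D ` (h ` S))" by auto
      ultimately show "\<theta> (\<Union>((\<lambda>j. D (h j)) ` S)) = c" using col hSK S by auto
      qed
    qed
  qed
qed


lemma funpow_in: "T ` X = X \<Longrightarrow> w \<in> X \<Longrightarrow> (T ^^ m) w \<in> X"
  by (induction m) auto

lemma ipow_nat: "ipow X T (int m) = T ^^ m"
  by (simp add: ipow_def)

lemma approx:
  fixes X :: "'a::metric_space set" and T :: "'a \<Rightarrow> 'a"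
  assumes tds: "tds X T" and sens: "block_Fip_sensitive X T (10 * \<delta>)" and \<delta>: "\<delta> > 0"
    and x: "x \<in> X" and r: "0 < r" "r \<le> \<delta>" and \<eta>: "\<eta> > 0"
  shows "\<exists>u\<in>X. \<exists>v\<in>X. dist x v < r \<and> 4 * \<delta> \<le> dist u v \<and>
    (\<exists>nn::nat \<Rightarrow> int. \<forall>S. S \<subseteq> {0..<d} \<and> S \<noteq> {} \<longrightarrow>
        dist (ipow X T (\<Sum>i\<in>S. nn i) u) (ipow X T (\<Sum>i\<in>S. nn i) v) < \<eta>)"
proof -
  have cX: "compact X" and TX: "T ` X = X" using tds unfolding tds_def by auto
  have "X \<subseteq> (\<Union>c\<in>X. ball c (\<eta>/2))" using \<eta> by auto
  then obtain Cs where Cs: "Cs \<subseteq> X" "finite Cs" "X \<subseteq> (\<Union>c\<in>Cs. ball c (\<eta>/2))"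
    using compactE_image[OF cX, of X "\<lambda>c. ball c (\<eta>/2)"] by auto
  define cell where "cell w = (SOME c. c \<in> Cs \<and> w \<in> ball c (\<eta>/2))" for w
  have cell: "cell w \<in> Cs \<and> w \<in> ball (cell w) (\<eta>/2)" if "w \<in> X" for w
  proof -
    have "\<exists>c. c \<in> Cs \<and> w \<in> ball c (\<eta>/2)" using Cs(3) that by blast
    then show ?thesis unfolding cell_def by (rule someI_ex)
  qed
  have close: "dist w1 w2 < \<eta>" if "w1 \<in> X" "w2 \<in> X" "cell w1 = cell w2" for w1 w2
  proof -
    have "dist w1 w2 \<le> dist w1 (cell w1) + dist (cell w1) w2" by (rule dist_triangle)
    also have "\<dots> < \<eta>/2 + \<eta>/2" using cell[OF that(1)] cell[OF that(2)] that(3)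
      by (simp add: dist_commute add_strict_mono)
    finally show ?thesis by simp
  qed
  obtain n0 where FK: "\<forall>(\<theta>::nat set \<Rightarrow> nat). card (\<theta> ` Pow {..<n0}) \<le> card (Cs \<times> Cs) \<longrightarrow>
     (\<exists>D c. (\<forall>j\<le>d. D j \<subseteq> {..<n0} \<and> D j \<noteq> {}) \<and> (\<forall>i\<le>d. \<forall>j\<le>d. i \<noteq> j \<longrightarrow> D i \<inter> D j = {}) \<and>
        (\<forall>S \<subseteq> {..d}. S \<noteq> {} \<longrightarrow> \<theta> (\<Union>(D ` S)) = c))"
    using folkman[where d=d and r="card (Cs \<times> Cs)"] by (elim exE)
  have "open (ball x r)" "x \<in> ball x r" using r by auto
  then obtain y where y: "y \<in> ball x r \<inter> X"
    and IP: "contains_finite_IP {n. dist ((T ^^ n) x) ((T ^^ n) y) > 10 * \<delta>} n0"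
    using sens x unfolding block_Fip_sensitive_def by blast
  obtain p where p: "FS p n0 \<subseteq> {n. dist ((T ^^ n) x) ((T ^^ n) y) > 10 * \<delta>}"
    using IP unfolding contains_finite_IP_def by blast
  have yX: "y \<in> X" and dxy: "dist x y < r" using y by auto
  define \<sigma> where "\<sigma> A = (\<Sum>i\<in>A. p i)" for A
  define \<theta>0 where "\<theta>0 A = (cell ((T ^^ \<sigma> A) x), cell ((T ^^ \<sigma> A) y))" for A
  define \<theta> where "\<theta> = to_nat_on (\<theta>0 ` Pow {..<n0}) \<circ> \<theta>0"
  have inj: "inj_on (to_nat_on (\<theta>0 ` Pow {..<n0})) (\<theta>0 ` Pow {..<n0})"
    by (rule inj_on_to_nat_on) (simp add: countable_finite)
  have "\<theta>0 ` Pow {..<n0} \<subseteq> Cs \<times> Cs"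
    unfolding \<theta>0_def using cell funpow_in[OF TX] x yX by auto
  then have "card (\<theta>0 ` Pow {..<n0}) \<le> card (Cs \<times> Cs)" by (rule card_mono[rotated]) (simp add: Cs)
  moreover have "card (\<theta> ` Pow {..<n0}) \<le> card (\<theta>0 ` Pow {..<n0})"
    unfolding \<theta>_def image_comp[symmetric] by (rule card_image_le) simp
  ultimately have "card (\<theta> ` Pow {..<n0}) \<le> card (Cs \<times> Cs)" by linarith
  note cc = this
  obtain D c where D: "\<forall>j\<le>d. D j \<subseteq> {..<n0} \<and> D j \<noteq> {}"
    and Dd: "\<forall>i\<le>d. \<forall>j\<le>d. i \<noteq> j \<longrightarrow> D i \<inter> D j = {}"
    and mono: "\<forall>S \<subseteq> {..d}. S \<noteq> {} \<longrightarrow> \<theta> (\<Union>(D ` S)) = c"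
    using FK[rule_format, OF cc] by (elim exE conjE) (rule that; assumption)
  have UD: "\<Union>(D ` S) \<subseteq> {..<n0}" if "S \<subseteq> {..d}" for S using D that by blast
  have mono0: "\<theta>0 (\<Union>(D ` S)) = \<theta>0 (D 0)" if "S \<subseteq> {..d}" "S \<noteq> {}" for S
  proof (rule inj_onD[OF inj])
    have "\<theta> (\<Union>(D ` S)) = \<theta> (\<Union>(D ` {0}))" using mono that by auto
    then show "to_nat_on (\<theta>0 ` Pow {..<n0}) (\<theta>0 (\<Union>(D ` S))) = to_nat_on (\<theta>0 ` Pow {..<n0}) (\<theta>0 (D 0))"
      unfolding \<theta>_def by simp
    show "\<theta>0 (\<Union>(D ` S)) \<in> \<theta>0 ` Pow {..<n0}" using UD[OF that(1)] by auto
    show "\<theta>0 (D 0) \<in> \<theta>0 ` Pow {..<n0}" using D by auto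
  qed
  have sigU: "\<sigma> (\<Union>(D ` S)) = (\<Sum>j\<in>S. \<sigma> (D j))" if "S \<subseteq> {..d}" for S
  proof -
    have fS: "finite S" using that finite_subset by blast
    have "\<forall>j\<in>S. finite (D j)" using D that by (meson atMost_iff finite_lessThan finite_subset subsetD)
    moreover have "\<forall>i\<in>S. \<forall>j\<in>S. i \<noteq> j \<longrightarrow> D i \<inter> D j = {}" using Dd that by auto
    ultimately show ?thesis unfolding \<sigma>_def using sum.UNION_disjoint[OF fS] by blast
  qed
  define q0 where "q0 = \<sigma> (D 0)"
  define nn where "nn i = int (\<sigma> (D (Suc i)))" for i
  have far: "10 * \<delta> < dist ((T ^^ q0) x) ((T ^^ q0) y)"
  proof -
    have "q0 \<in> FS p n0" unfolding FS_def q0_def \<sigma>_def using D[rule_format, of 0] by (auto simp: atLeast0LessThan)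
    then show ?thesis using p by auto
  qed
  have cube: "dist (ipow X T (\<Sum>i\<in>S. nn i) ((T ^^ q0) w)) (ipow X T (\<Sum>i\<in>S. nn i) w) < \<eta>"
    if S: "S \<subseteq> {0..<d}" "S \<noteq> {}" and w: "w = x \<or> w = y" for S w
  proof -
    define s where "s = (\<Sum>j\<in>Suc ` S. \<sigma> (D j))"
    have SucS: "Suc ` S \<subseteq> {..d}" "Suc ` S \<noteq> {}" using S by auto
    have fS: "finite S" using S finite_subset by blast
    have sum1: "(\<Sum>i\<in>S. nn i) = int s"
      unfolding nn_def s_def by (simp add: sum.reindex)
    have ins: "insert 0 (Suc ` S) \<subseteq> {..d}" using SucS by auto
    have sum2: "\<sigma> (\<Union>(D ` insert 0 (Suc ` S))) = q0 + s"
      unfolding sigU[OF ins] q0_def s_def using fS by (simp add: sum.insert)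
    have sum3: "\<sigma> (\<Union>(D ` (Suc ` S))) = s" unfolding sigU[OF SucS(1)] s_def ..
    have e1: "\<theta>0 (\<Union>(D ` insert 0 (Suc ` S))) = \<theta>0 (\<Union>(D ` (Suc ` S)))"
      using mono0[OF ins] mono0[OF SucS] by simp
    have eq: "cell ((T ^^ (q0 + s)) w) = cell ((T ^^ s) w)"
      using e1 w unfolding \<theta>0_def sum2 sum3 by auto
    have wX: "w \<in> X" using w x yX by auto
    have "dist ((T ^^ (q0 + s)) w) ((T ^^ s) w) < \<eta>"
      using close[OF funpow_in[OF TX wX] funpow_in[OF TX wX] eq] .
    moreover have "(T ^^ s) ((T ^^ q0) w) = (T ^^ (q0 + s)) w" using funpow_add[of s q0 T] by (simp add: add.commute)
    ultimately show ?thesis unfolding sum1 ipow_nat by simp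
  qed
  have tri: "dist ((T ^^ q0) x) ((T ^^ q0) y) \<le> dist ((T ^^ q0) x) x + dist x y + dist y ((T ^^ q0) y)"
  proof -
    have "dist ((T ^^ q0) x) ((T ^^ q0) y) \<le> dist ((T ^^ q0) x) x + dist x ((T ^^ q0) y)" by (rule dist_triangle)
    moreover have "dist x ((T ^^ q0) y) \<le> dist x y + dist y ((T ^^ q0) y)" by (rule dist_triangle)
    ultimately show ?thesis by linarith
  qed
  have "4 * \<delta> \<le> dist ((T ^^ q0) x) x \<or> 4 * \<delta> \<le> dist ((T ^^ q0) y) y"
  proof -
    have "dist y ((T ^^ q0) y) = dist ((T ^^ q0) y) y" by (rule dist_commute)
    then show ?thesis using far tri dxy r \<delta> by linarith
  qed
  then show ?thesis
  proof
    assume a: "4 * \<delta> \<le> dist ((T ^^ q0) x) x"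
    have "\<exists>nn::nat \<Rightarrow> int. \<forall>S. S \<subseteq> {0..<d} \<and> S \<noteq> {} \<longrightarrow>
        dist (ipow X T (\<Sum>i\<in>S. nn i) ((T ^^ q0) x)) (ipow X T (\<Sum>i\<in>S. nn i) x) < \<eta>"
      using cube by blast
    moreover have "dist x x < r" using r by simp
    ultimately show ?thesis using a x funpow_in[OF TX x] by blast
  next
    assume a: "4 * \<delta> \<le> dist ((T ^^ q0) y) y"
    have "\<exists>nn::nat \<Rightarrow> int. \<forall>S. S \<subseteq> {0..<d} \<and> S \<noteq> {} \<longrightarrow>
        dist (ipow X T (\<Sum>i\<in>S. nn i) ((T ^^ q0) y)) (ipow X T (\<Sum>i\<in>S. nn i) y) < \<eta>"
      using cube by blast
    then show ?thesis using a dxy yX funpow_in[OF TX yX] by blast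
  qed
qed

theorem proposition4p11:
  fixes X :: "'a::metric_space set" and T :: "'a \<Rightarrow> 'a" and \<delta> :: real
    and x :: 'a and U :: "'a set"
  assumes "tds X T"
    and "\<exists>S. homeomorphism X X T S"
    and "minimal_sys X T"
    and "\<delta> > 0"
    and "block_Fip_sensitive X T (10 * \<delta>)"
    and "x \<in> X"
    and "open U" and "x \<in> U"
  shows "\<exists>z\<in>U \<inter> X. \<exists>y\<in>X. (y, z) \<in> RP_inf X T \<and> dist z y \<ge> \<delta>"
proof -
  note tds = assms(1) and \<delta> = assms(4) and sens = assms(5) and x = assms(6)
  have cX: "compact X" using tds unfolding tds_def by auto
  obtain e where e: "e > 0" "ball x e \<subseteq> U" using assms(7,8) open_contains_ball by blast
  define r where "r = min (e/2) \<delta>"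
  have r: "0 < r" "r \<le> \<delta>" "r < e" using e \<delta> unfolding r_def by auto
  define P where "P k t \<longleftrightarrow> fst t \<in> X \<and> fst (snd t) \<in> X \<and> dist x (fst (snd t)) < r \<and>
      4 * \<delta> \<le> dist (fst t) (fst (snd t)) \<and>
      (\<forall>S. S \<subseteq> {0..<Suc k} \<and> S \<noteq> {} \<longrightarrow>
        dist (ipow X T (\<Sum>i\<in>S. snd (snd t) i) (fst t)) (ipow X T (\<Sum>i\<in>S. snd (snd t) i) (fst (snd t)))
          < inverse (real (Suc k)))" for k and t :: "'a \<times> 'a \<times> (nat \<Rightarrow> int)"
  have "\<forall>k. \<exists>t. P k t"
  proof
    fix k
    have "inverse (real (Suc k)) > 0" by simp
    from approx[OF tds sens \<delta> x r(1,2) this, of "Suc k"]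
    obtain u v nn where "u \<in> X" "v \<in> X" "dist x v < r" "4 * \<delta> \<le> dist u v"
      "\<forall>S. S \<subseteq> {0..<Suc k} \<and> S \<noteq> {} \<longrightarrow>
        dist (ipow X T (\<Sum>i\<in>S. nn i) u) (ipow X T (\<Sum>i\<in>S. nn i) v) < inverse (real (Suc k))"
      by blast
    then have "P k (u, v, nn)" unfolding P_def by simp
    then show "\<exists>t. P k t" by blast
  qed
  then obtain g where g: "\<And>k. P k (g k)" by metis
  define u where "u k = fst (g k)" for k
  define v where "v k = fst (snd (g k))" for k
  define nn where "nn k = snd (snd (g k))" for k
  have uX: "u k \<in> X" and vX: "v k \<in> X" and vx: "dist x (v k) < r" and uv: "4 * \<delta> \<le> dist (u k) (v k)"
    and cub: "\<And>S. S \<subseteq> {0..<Suc k} \<Longrightarrow> S \<noteq> {} \<Longrightarrow>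
        dist (ipow X T (\<Sum>i\<in>S. nn k i) (u k)) (ipow X T (\<Sum>i\<in>S. nn k i) (v k)) < inverse (real (Suc k))"
    for k using g[of k] unfolding P_def u_def v_def nn_def by auto
  have "seq_compact (X \<times> X)" by (rule compact_imp_seq_compact) (simp add: compact_Times cX)
  moreover have "\<forall>k. (u k, v k) \<in> X \<times> X" using uX vX by auto
  ultimately obtain l \<phi> where l: "l \<in> X \<times> X" and \<phi>: "strict_mono \<phi>"
    and lim: "((\<lambda>k. (u k, v k)) \<circ> \<phi>) \<longlonglongrightarrow> l"
    by (rule seq_compactE)
  obtain y0 z0 where l': "l = (y0, z0)" by (cases l)
  have y0X: "y0 \<in> X" and z0X: "z0 \<in> X" using l l' by auto
  have limu: "(\<lambda>k. u (\<phi> k)) \<longlonglongrightarrow> y0" using tendsto_fst[OF lim] l' by (simp add: o_def)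
  have limv: "(\<lambda>k. v (\<phi> k)) \<longlonglongrightarrow> z0" using tendsto_snd[OF lim] l' by (simp add: o_def)
  have "dist x z0 \<le> r"
  proof (rule LIMSEQ_le_const2)
    show "(\<lambda>k. dist x (v (\<phi> k))) \<longlonglongrightarrow> dist x z0" by (intro tendsto_intros limv)
    show "\<exists>N. \<forall>n\<ge>N. dist x (v (\<phi> n)) \<le> r" using vx less_imp_le by blast
  qed
  then have z0U: "z0 \<in> U" using r e by auto
  have "4 * \<delta> \<le> dist y0 z0"
  proof (rule LIMSEQ_le_const)
    show "(\<lambda>k. dist (u (\<phi> k)) (v (\<phi> k))) \<longlonglongrightarrow> dist y0 z0" by (intro tendsto_intros limu limv)
    show "\<exists>N. \<forall>n\<ge>N. 4 * \<delta> \<le> dist (u (\<phi> n)) (v (\<phi> n))" using uv by blast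
  qed
  then have far: "\<delta> \<le> dist z0 y0" using \<delta> by (simp add: dist_commute)
  have RP: "(y0, z0) \<in> RP X T d" for d
    unfolding RP_def
  proof (clarsimp simp only: mem_Collect_eq case_prod_conv, intro conjI y0X z0X allI impI)
    fix \<eta> :: real assume \<eta>: "0 < \<eta>"
    obtain N1 where N1: "\<And>k. k \<ge> N1 \<Longrightarrow> dist (u (\<phi> k)) y0 < \<eta>"
      using limu \<eta> unfolding tendsto_iff eventually_sequentially by blast
    obtain N2 where N2: "\<And>k. k \<ge> N2 \<Longrightarrow> dist (v (\<phi> k)) z0 < \<eta>"
      using limv \<eta> unfolding tendsto_iff eventually_sequentially by blast
    obtain N3 where N3: "inverse (real (Suc N3)) < \<eta>" using reals_Archimedean[OF \<eta>] by blast
    define k where "k = max (max N1 N2) (max N3 d)"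
    have kk: "k \<le> \<phi> k" using seq_suble[OF \<phi>] by blast
    have a1: "dist y0 (u (\<phi> k)) < \<eta>" using N1[of k] unfolding k_def by (simp add: dist_commute)
    have a2: "dist z0 (v (\<phi> k)) < \<eta>" using N2[of k] unfolding k_def by (simp add: dist_commute)
    have "inverse (real (Suc (\<phi> k))) \<le> inverse (real (Suc N3))"
      using kk unfolding k_def by (intro le_imp_inverse_le) auto
    then have a3: "inverse (real (Suc (\<phi> k))) < \<eta>" using N3 by linarith
    have a4: "d \<le> Suc (\<phi> k)" using kk unfolding k_def by auto
    have "\<forall>S. S \<subseteq> {0..<d} \<and> S \<noteq> {} \<longrightarrow>
         dist (ipow X T (\<Sum>i\<in>S. nn (\<phi> k) i) (u (\<phi> k))) (ipow X T (\<Sum>i\<in>S. nn (\<phi> k) i) (v (\<phi> k))) < \<eta>"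
    proof (intro allI impI)
      fix S assume S: "S \<subseteq> {0..<d} \<and> S \<noteq> {}"
      then have "S \<subseteq> {0..<Suc (\<phi> k)}" using a4 by auto
      then show "dist (ipow X T (\<Sum>i\<in>S. nn (\<phi> k) i) (u (\<phi> k))) (ipow X T (\<Sum>i\<in>S. nn (\<phi> k) i) (v (\<phi> k))) < \<eta>"
        using cub[of S "\<phi> k"] S a3 by linarith
    qed
    then show "\<exists>x'\<in>X. \<exists>y'\<in>X. \<exists>n::nat \<Rightarrow> int. dist y0 x' < \<eta> \<and> dist z0 y' < \<eta> \<and>
      (\<forall>S. S \<subseteq> {0..<d} \<and> S \<noteq> {} \<longrightarrow> dist (ipow X T (\<Sum>i\<in>S. n i) x') (ipow X T (\<Sum>i\<in>S. n i) y') < \<eta>)"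
      using a1 a2 uX vX by blast
  qed
  have "(y0, z0) \<in> RP_inf X T" unfolding RP_inf_def using RP by blast
  then show ?thesis using z0U z0X y0X far by blast
qed

end
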